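(* Let $G$ be a connected graph with no true twins and with $\mathrm{diam}(G)=2$. Then $\mathrm{gp}(G)=\omega(G_{\rm SR})$ if and only if $\mathrm{gp}(G)=\alpha(G)$.
   Context: All graphs are finite and simple. For a connected graph $G$, $d_G(u,v)$ is the distance between $u$ and $v$, and a geodesic is a shortest path. A set $S\subseteq V(G)$ is a general position set if no three pairwise distinct vertices of $S$ lie on a common geodesic of $G$; $\mathrm{gp}(G)$ is the maximum cardinality of a general position set. A vertex $u$ is maximally distant from a vertex $v$ if every neighbor $w$ of $u$ satisfies $d_G(v,w)\le d_G(u,v)$; $u$ and $v$ are mutually maximally distant (MMD) if $u$ is maximally distant from $v$ and $v$ is maximally distant from $u$. The strong resolving graph $G_{\rm SR}$ has vertex set $V(G)$, two distinct vertices being adjacent in $G_{\rm SR}$ iff they are MMD in $G$. $\omega$ denotes the clique number and $\alpha$ the independence number. Vertices $u,v$ are true twins if $N[u]=N[v]$ (closed neighborhoods). *)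

theory Defs
  imports Main
begin

definition simple_graph :: "'a set \<Rightarrow> ('a \<Rightarrow> 'a \<Rightarrow> bool) \<Rightarrow> bool" where
  "simple_graph V E \<longleftrightarrow> finite V \<and> (\<forall>u v. E u v \<longrightarrow> u \<in> V \<and> v \<in> V)
     \<and> (\<forall>u v. E u v \<longrightarrow> E v u) \<and> (\<forall>u. \<not> E u u)"

definition is_walk :: "'a set \<Rightarrow> ('a \<Rightarrow> 'a \<Rightarrow> bool) \<Rightarrow> 'a list \<Rightarrow> bool" where
  "is_walk V E xs \<longleftrightarrow> xs \<noteq> [] \<and> set xs \<subseteq> V \<and>
     (\<forall>i. Suc i < length xs \<longrightarrow> E (xs ! i) (xs ! Suc i))"

definition walk_between :: "'a set \<Rightarrow> ('a \<Rightarrow> 'a \<Rightarrow> bool) \<Rightarrow> 'a \<Rightarrow> 'a \<Rightarrow> 'a list \<Rightarrow> bool" where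
  "walk_between V E u v xs \<longleftrightarrow> is_walk V E xs \<and> hd xs = u \<and> last xs = v"

definition connected_graph :: "'a set \<Rightarrow> ('a \<Rightarrow> 'a \<Rightarrow> bool) \<Rightarrow> bool" where
  "connected_graph V E \<longleftrightarrow> V \<noteq> {} \<and> (\<forall>u\<in>V. \<forall>v\<in>V. \<exists>xs. walk_between V E u v xs)"

definition gdist :: "'a set \<Rightarrow> ('a \<Rightarrow> 'a \<Rightarrow> bool) \<Rightarrow> 'a \<Rightarrow> 'a \<Rightarrow> nat" where
  "gdist V E u v = (LEAST n. \<exists>xs. walk_between V E u v xs \<and> length xs = Suc n)"

definition geodesic :: "'a set \<Rightarrow> ('a \<Rightarrow> 'a \<Rightarrow> bool) \<Rightarrow> 'a list \<Rightarrow> bool" where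
  "geodesic V E xs \<longleftrightarrow> is_walk V E xs \<and> length xs = Suc (gdist V E (hd xs) (last xs))"

definition diam :: "'a set \<Rightarrow> ('a \<Rightarrow> 'a \<Rightarrow> bool) \<Rightarrow> nat" where
  "diam V E = Max {gdist V E u v | u v. u \<in> V \<and> v \<in> V}"

definition gp_set :: "'a set \<Rightarrow> ('a \<Rightarrow> 'a \<Rightarrow> bool) \<Rightarrow> 'a set \<Rightarrow> bool" where
  "gp_set V E S \<longleftrightarrow> S \<subseteq> V \<and>
     (\<forall>x\<in>S. \<forall>y\<in>S. \<forall>z\<in>S. x \<noteq> y \<and> y \<noteq> z \<and> x \<noteq> z \<longrightarrow>
        \<not> (\<exists>P. geodesic V E P \<and> x \<in> set P \<and> y \<in> set P \<and> z \<in> set P))"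

definition gp_number :: "'a set \<Rightarrow> ('a \<Rightarrow> 'a \<Rightarrow> bool) \<Rightarrow> nat" where
  "gp_number V E = Max (card ` {S. gp_set V E S})"

definition maximally_distant :: "'a set \<Rightarrow> ('a \<Rightarrow> 'a \<Rightarrow> bool) \<Rightarrow> 'a \<Rightarrow> 'a \<Rightarrow> bool" where
  "maximally_distant V E u v \<longleftrightarrow> (\<forall>w. E u w \<longrightarrow> gdist V E v w \<le> gdist V E u v)"

definition MMD :: "'a set \<Rightarrow> ('a \<Rightarrow> 'a \<Rightarrow> bool) \<Rightarrow> 'a \<Rightarrow> 'a \<Rightarrow> bool" where
  "MMD V E u v \<longleftrightarrow> maximally_distant V E u v \<and> maximally_distant V E v u"

definition strong_resolving_edge :: "'a set \<Rightarrow> ('a \<Rightarrow> 'a \<Rightarrow> bool) \<Rightarrow> 'a \<Rightarrow> 'a \<Rightarrow> bool" where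
  "strong_resolving_edge V E u v \<longleftrightarrow> u \<in> V \<and> v \<in> V \<and> u \<noteq> v \<and> MMD V E u v"

definition clique_number :: "'a set \<Rightarrow> ('a \<Rightarrow> 'a \<Rightarrow> bool) \<Rightarrow> nat" where
  "clique_number V E = Max (card ` {K. K \<subseteq> V \<and> (\<forall>x\<in>K. \<forall>y\<in>K. x \<noteq> y \<longrightarrow> E x y)})"

definition independence_number :: "'a set \<Rightarrow> ('a \<Rightarrow> 'a \<Rightarrow> bool) \<Rightarrow> nat" where
  "independence_number V E = Max (card ` {I. I \<subseteq> V \<and> (\<forall>x\<in>I. \<forall>y\<in>I. \<not> E x y)})"

definition closed_nbhd :: "'a set \<Rightarrow> ('a \<Rightarrow> 'a \<Rightarrow> bool) \<Rightarrow> 'a \<Rightarrow> 'a set" where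
  "closed_nbhd V E u = insert u {w \<in> V. E u w}"

definition true_twins :: "'a set \<Rightarrow> ('a \<Rightarrow> 'a \<Rightarrow> bool) \<Rightarrow> 'a \<Rightarrow> 'a \<Rightarrow> bool" where
  "true_twins V E u v \<longleftrightarrow> closed_nbhd V E u = closed_nbhd V E v"

definition no_true_twins :: "'a set \<Rightarrow> ('a \<Rightarrow> 'a \<Rightarrow> bool) \<Rightarrow> bool" where
  "no_true_twins V E \<longleftrightarrow> (\<forall>u\<in>V. \<forall>v\<in>V. u \<noteq> v \<longrightarrow> \<not> true_twins V E u v)"

end

theory Submission
  imports Defs
begin

lemma gdist_ex:
  assumes "connected_graph V E" "u \<in> V" "v \<in> V"
  shows "\<exists>xs. walk_between V E u v xs \<and> length xs = Suc (gdist V E u v)"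
proof -
  obtain xs where xs: "walk_between V E u v xs" using assms unfolding connected_graph_def by blast
  hence "xs \<noteq> []" unfolding walk_between_def is_walk_def by blast
  hence "\<exists>n. \<exists>xs. walk_between V E u v xs \<and> length xs = Suc n" using xs
    by (metis Suc_pred length_greater_0_conv)
  thus ?thesis unfolding gdist_def by (rule LeastI_ex)
qed

lemma gdist_le1:
  assumes "connected_graph V E" "u \<in> V" "v \<in> V" "gdist V E u v \<le> 1"
  shows "u = v \<or> E u v"
proof -
  obtain xs where xs: "walk_between V E u v xs" "length xs = Suc (gdist V E u v)"
    using gdist_ex[OF assms(1-3)] by blast
  show ?thesis
  proof (cases "gdist V E u v = 0")
    case True
    then obtain a where "xs = [a]" using xs(2) by (metis length_0_conv length_Suc_conv)
    thus ?thesis using xs(1) unfolding walk_between_def by auto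
  next
    case False
    hence "length xs = 2" using xs(2) assms(4) by simp
    then obtain a b where ab: "xs = [a,b]"
      by (metis (no_types, lifting) One_nat_def Suc_1 length_0_conv length_Suc_conv)
    hence "E a b" using xs(1) unfolding walk_between_def is_walk_def by force
    thus ?thesis using xs(1) ab unfolding walk_between_def by simp
  qed
qed

lemma gdist_le_diam:
  assumes "simple_graph V E" "u \<in> V" "v \<in> V"
  shows "gdist V E u v \<le> diam V E"
proof -
  have "{gdist V E u v | u v. u \<in> V \<and> v \<in> V} = (\<lambda>(u,v). gdist V E u v) ` (V \<times> V)" by auto
  moreover have "finite V" using assms(1) unfolding simple_graph_def by blast
  ultimately have "finite {gdist V E u v | u v. u \<in> V \<and> v \<in> V}" by simp
  thus ?thesis unfolding diam_def using assms by (intro Max_ge) auto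
qed

lemma key:
  assumes g: "simple_graph V E" and c: "connected_graph V E"
    and t: "no_true_twins V E" and d: "diam V E = 2"
    and uv: "u \<in> V" "v \<in> V" "u \<noteq> v"
  shows "MMD V E u v \<longleftrightarrow> \<not> E u v"
proof
  assume m: "MMD V E u v"
  show "\<not> E u v"
  proof
    assume e: "E u v"
    have sub: "closed_nbhd V E a \<subseteq> closed_nbhd V E b"
      if "maximally_distant V E a b" "E a b" "E b a" "a \<in> V" "b \<in> V" for a b
    proof
      fix w assume w: "w \<in> closed_nbhd V E a"
      show "w \<in> closed_nbhd V E b"
      proof (cases "w = a")
        case True thus ?thesis using that unfolding closed_nbhd_def by auto
      next
        case False
        hence ew: "E a w" "w \<in> V" using w unfolding closed_nbhd_def by auto
        have "gdist V E a b \<le> 1"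
          unfolding gdist_def
          by (rule Least_le[where k=1], rule exI[where x="[a,b]"])
             (use that in \<open>auto simp: walk_between_def is_walk_def less_Suc_eq\<close>)
        hence "gdist V E b w \<le> 1" using that(1) ew unfolding maximally_distant_def by force
        hence "b = w \<or> E b w" using gdist_le1[OF c that(5) ew(2)] by blast
        thus ?thesis using ew unfolding closed_nbhd_def by auto
      qed
    qed
    have e2: "E v u" using e g unfolding simple_graph_def by blast
    have "closed_nbhd V E u = closed_nbhd V E v"
      using sub[of u v] sub[of v u] m e e2 uv unfolding MMD_def by blast
    thus False using t uv unfolding no_true_twins_def true_twins_def by blast
  qed
next
  assume ne: "\<not> E u v"
  have ge: "2 \<le> gdist V E a b" if "a \<in> V" "b \<in> V" "a \<noteq> b" "\<not> E a b" for a b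
    using gdist_le1[OF c that(1,2)] that by force
  have md: "maximally_distant V E a b" if "a \<in> V" "b \<in> V" "a \<noteq> b" "\<not> E a b" for a b
    unfolding maximally_distant_def
  proof (intro allI impI)
    fix w assume "E a w"
    hence "w \<in> V" using g unfolding simple_graph_def by blast
    hence "gdist V E b w \<le> 2" using gdist_le_diam[OF g that(2)] d by simp
    thus "gdist V E b w \<le> gdist V E a b" using ge[OF that] by simp
  qed
  have "\<not> E v u" using ne g unfolding simple_graph_def by blast
  thus "MMD V E u v" unfolding MMD_def using md[of u v] md[of v u] uv ne by auto
qed

theorem proposition2p4:
  fixes V :: "'a set" and E :: "'a \<Rightarrow> 'a \<Rightarrow> bool"
  assumes "simple_graph V E"
    and "connected_graph V E"
    and "no_true_twins V E"
    and "diam V E = 2"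
  shows "gp_number V E = clique_number V (strong_resolving_edge V E)
         \<longleftrightarrow> gp_number V E = independence_number V E"
proof -
  have irr: "\<And>x. \<not> E x x" using assms(1) unfolding simple_graph_def by blast
  have "{K. K \<subseteq> V \<and> (\<forall>x\<in>K. \<forall>y\<in>K. x \<noteq> y \<longrightarrow> strong_resolving_edge V E x y)}
      = {I. I \<subseteq> V \<and> (\<forall>x\<in>I. \<forall>y\<in>I. \<not> E x y)}"
  proof (intro Collect_cong conj_cong refl iffI ballI)
    fix K x y assume K: "K \<subseteq> V" "\<forall>x\<in>K. \<forall>y\<in>K. x \<noteq> y \<longrightarrow> strong_resolving_edge V E x y"
      and xy: "x \<in> K" "y \<in> K"
    show "\<not> E x y"
    proof (cases "x = y")
      case True thus ?thesis using irr by simp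
    next
      case False
      thus ?thesis using K xy key[OF assms, of x y] unfolding strong_resolving_edge_def by blast
    qed
  next
    fix K x y assume K: "K \<subseteq> V" "\<forall>x\<in>K. \<forall>y\<in>K. \<not> E x y" and xy: "x \<in> K" "y \<in> K"
    show "x \<noteq> y \<longrightarrow> strong_resolving_edge V E x y"
      using K xy key[OF assms, of x y] unfolding strong_resolving_edge_def by blast
  qed
  hence "clique_number V (strong_resolving_edge V E) = independence_number V E"
    unfolding clique_number_def independence_number_def by simp
  thus ?thesis by simp
qed

end
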